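(* Let $M\ge 0$, $k\ge 1$ and $m\ge 0$ be integers. Let $\mathcal{P}_M(k,m)$ be the set of partitions $\pi=(\lambda_1,\dots,\lambda_M)$ into exactly $M$ parts with smallest part $\lambda_M\ge k$ and $\lambda_i-\lambda_{i+1}\ge m$ for $1\le i\le M-1$ (for $M=0$, $\mathcal{P}_0(k,m)$ consists only of the empty partition). For $\pi\in\mathcal{P}_M(k,m)$ define \[\omega_{k,m}(\pi):=(\lambda_M+1-k)\prod_{i=1}^{M-1}(\lambda_i-\lambda_{i+1}+1-m),\] with $\omega_{k,m}$ of the empty partition equal to $1$. Then \[\sum_{\pi\in\mathcal{P}_M(k,m)}\omega_{k,m}(\pi)\,q^{|\pi|}=\frac{q^{m\binom{M}{2}+kM}}{(q;q)_M^2}.\]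
   Context: A partition is a finite weakly decreasing sequence of positive integers; $|\pi|$ is the sum of its parts. $(a;q)_L=\prod_{n=0}^{L-1}(1-aq^n)$. *)

theory Defs
  imports "HOL-Computational_Algebra.Formal_Power_Series"
begin

definition qpoch :: "'a::comm_ring_1 \<Rightarrow> 'a \<Rightarrow> nat \<Rightarrow> 'a" where
  "qpoch a q L = (\<Prod>n<L. 1 - a * q ^ n)"

text \<open>Partitions are lists of parts in weakly decreasing order (lambda_1, ..., lambda_M).
  P_M(k,m): exactly M positive parts, smallest part >= k, consecutive gaps >= m.\<close>
definition partsP :: "nat \<Rightarrow> nat \<Rightarrow> nat \<Rightarrow> nat list set" where
  "partsP M k m = {xs. length xs = M \<and> (\<forall>x\<in>set xs. 0 < x)
      \<and> (\<forall>i. Suc i < M \<longrightarrow> xs ! (Suc i) \<le> xs ! i \<and> xs ! i - xs ! (Suc i) \<ge> m)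
      \<and> (0 < M \<longrightarrow> xs ! (M - 1) \<ge> k)}"

definition omega :: "nat \<Rightarrow> nat \<Rightarrow> nat list \<Rightarrow> nat" where
  "omega k m xs = (if xs = [] then 1 else
     (last xs + 1 - k) * (\<Prod>i<length xs - 1. xs ! i - xs ! (Suc i) + 1 - m))"

definition genfun :: "nat \<Rightarrow> nat \<Rightarrow> nat \<Rightarrow> rat fps" where
  "genfun M k m = Abs_fps (\<lambda>n. of_nat (\<Sum>xs\<in>{xs\<in>partsP M k m. sum_list xs = n}. omega k m xs))"

end

theory Submission
  imports Defs
begin

unbundle fps_syntax

definition SS :: "nat \<Rightarrow> nat \<Rightarrow> nat \<Rightarrow> nat \<Rightarrow> nat list set" where
  "SS M k m n = {xs\<in>partsP M k m. sum_list xs = n}"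

definition pr :: "nat \<Rightarrow> nat list \<Rightarrow> nat" where
  "pr m xs = (\<Prod>i<length xs - 1. xs ! i - xs ! (Suc i) + 1 - m)"

lemma omega_pr: "xs \<noteq> [] \<Longrightarrow> omega k m xs = (last xs + 1 - k) * pr m xs"
  by (simp add: omega_def pr_def)

lemma SS_finite: "finite (SS M k m n)"
proof -
  have "SS M k m n \<subseteq> {xs. set xs \<subseteq> {0..n} \<and> length xs = M}"
    by (auto simp: SS_def partsP_def member_le_sum_list)
  thus ?thesis by (rule finite_subset) (auto intro: finite_lists_length_eq)
qed

lemma parts_ge_last:
  assumes "xs \<in> partsP M k m" "d < M"
  shows "xs ! (M - 1) \<le> xs ! (M - 1 - d)"
  using assms(2)
proof (induction d)
  case 0 then show ?case by simp
next
  case (Suc d)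
  have "Suc (M - 1 - Suc d) = M - 1 - d" "M - 1 - d < M" using Suc.prems by auto
  then have "xs ! (M - 1 - d) \<le> xs ! (M - 1 - Suc d)"
    using assms(1) unfolding partsP_def by (metis (no_types, lifting) mem_Collect_eq)
  with Suc show ?case by simp
qed

lemma parts_ge_k:
  assumes "xs \<in> partsP M k m" "x \<in> set xs"
  shows "k \<le> x"
proof -
  obtain i where i: "i < M" "x = xs ! i" using assms by (auto simp: partsP_def in_set_conv_nth)
  have "xs ! (M - 1) \<le> xs ! (M - 1 - (M - 1 - i))"
    using parts_ge_last[OF assms(1), of "M - 1 - i"] i by auto
  moreover have "M - 1 - (M - 1 - i) = i" using i by auto
  moreover have "k \<le> xs ! (M - 1)" using assms i by (auto simp: partsP_def)
  ultimately show ?thesis using i by auto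
qed

lemma parts_pos: "k \<ge> 1 \<Longrightarrow> xs \<in> partsP M k m \<Longrightarrow> x \<in> set xs \<Longrightarrow> 0 < x"
  using parts_ge_k by fastforce

lemma map_Suc_parts:
  assumes "k \<ge> 1"
  shows "map Suc xs \<in> partsP M (Suc k) m \<longleftrightarrow> xs \<in> partsP M k m"
proof
  assume h: "map Suc xs \<in> partsP M (Suc k) m"
  have "\<forall>x\<in>set xs. 0 < x"
  proof
    fix x assume "x \<in> set xs"
    then have "Suc x \<in> set (map Suc xs)" by simp
    then have "Suc k \<le> Suc x" using parts_ge_k[OF h] by blast
    then show "0 < x" using assms by simp
  qed
  with h show "xs \<in> partsP M k m" by (auto simp: partsP_def)
next
  assume h: "xs \<in> partsP M k m"
  then show "map Suc xs \<in> partsP M (Suc k) m" by (auto simp: partsP_def)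
qed

lemma SS_shift:
  assumes "k \<ge> 1"
  shows "SS M (Suc k) m n = map Suc ` {ys\<in>partsP M k m. sum_list ys + M = n}"
proof
  show "map Suc ` {ys\<in>partsP M k m. sum_list ys + M = n} \<subseteq> SS M (Suc k) m n"
    using assms by (auto simp: SS_def map_Suc_parts sum_list_Suc[where f="\<lambda>x. x", simplified] partsP_def)
next
  show "SS M (Suc k) m n \<subseteq> map Suc ` {ys\<in>partsP M k m. sum_list ys + M = n}"
  proof
    fix xs assume xs: "xs \<in> SS M (Suc k) m n"
    have pos: "\<forall>x\<in>set xs. 0 < x" using xs by (auto simp: SS_def partsP_def)
    define ys where "ys = map (\<lambda>x. x - 1) xs"
    have e: "xs = map Suc ys" using pos unfolding ys_def by (induction xs) auto
    have "ys \<in> partsP M k m" using xs e map_Suc_parts assms by (auto simp: SS_def)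
    moreover have "sum_list ys + M = n" using xs e
      by (auto simp: SS_def partsP_def sum_list_Suc[where f="\<lambda>x. x", simplified])
    ultimately show "xs \<in> map Suc ` {ys\<in>partsP M k m. sum_list ys + M = n}" using e by auto
  qed
qed

lemma pr_map_Suc: "pr m (map Suc xs) = pr m xs"
  by (simp add: pr_def)

lemma sum_shift:
  assumes "k \<ge> 1" "\<And>ys. f (map Suc ys) = g ys"
  shows "(\<Sum>xs\<in>SS M (Suc k) m n. f xs) = (if M \<le> n then (\<Sum>ys\<in>SS M k m (n - M). g ys) else 0)"
proof -
  have "(\<Sum>xs\<in>SS M (Suc k) m n. f xs) = (\<Sum>ys\<in>{ys\<in>partsP M k m. sum_list ys + M = n}. f (map Suc ys))"
    unfolding SS_shift[OF assms(1)]
    by (simp add: sum.reindex[OF inj_on_subset[OF inj_mapI[OF inj_Suc] subset_UNIV]] o_def)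
  also have "\<dots> = (\<Sum>ys\<in>{ys\<in>partsP M k m. sum_list ys + M = n}. g ys)" using assms(2) by simp
  also have "\<dots> = (if M \<le> n then (\<Sum>ys\<in>SS M k m (n - M). g ys) else 0)"
  proof (cases "M \<le> n")
    case True
    then have "{ys\<in>partsP M k m. sum_list ys + M = n} = SS M k m (n - M)" by (auto simp: SS_def)
    then show ?thesis using True by simp
  next
    case False
    then have "{ys\<in>partsP M k m. sum_list ys + M = n} = {}" by auto
    then show ?thesis using False by simp
  qed
  finally show ?thesis .
qed

lemma snoc_iff:
  assumes "k \<ge> 1"
  shows "ys @ [a] \<in> partsP (Suc N) k m \<longleftrightarrow> (k \<le> a \<and> length ys = N \<and> ys \<in> partsP N (a + m) m)"
proof
  assume h: "ys @ [a] \<in> partsP (Suc N) k m"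
  have len: "length ys = N" using h by (simp add: partsP_def)
  have ka: "k \<le> a" using h len by (simp add: partsP_def nth_append)
  have pos: "\<forall>x\<in>set ys. 0 < x" using h by (simp add: partsP_def)
  have dec: "\<And>i. Suc i < Suc N \<Longrightarrow> (ys@[a]) ! (Suc i) \<le> (ys@[a]) ! i \<and> (ys@[a]) ! i - (ys@[a]) ! (Suc i) \<ge> m"
    using h by (simp add: partsP_def)
  have d1: "\<forall>i. Suc i < N \<longrightarrow> ys ! (Suc i) \<le> ys ! i \<and> ys ! i - ys ! (Suc i) \<ge> m"
  proof (intro allI impI)
    fix i assume "Suc i < N"
    then show "ys ! (Suc i) \<le> ys ! i \<and> ys ! i - ys ! (Suc i) \<ge> m"
      using dec[of i] len by (simp add: nth_append)
  qed
  have d2: "0 < N \<longrightarrow> ys ! (N - 1) \<ge> a + m"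
  proof
    assume "0 < N"
    then have "Suc (N - 1) = N" by simp
    then show "ys ! (N - 1) \<ge> a + m" using dec[of "N - 1"] len \<open>0 < N\<close> by (simp add: nth_append) linarith
  qed
  show "k \<le> a \<and> length ys = N \<and> ys \<in> partsP N (a + m) m"
    using ka len pos d1 d2 by (simp add: partsP_def)
next
  assume h: "k \<le> a \<and> length ys = N \<and> ys \<in> partsP N (a + m) m"
  then have len: "length ys = N" and ka: "k \<le> a" and p: "ys \<in> partsP N (a + m) m" by auto
  have pos: "\<forall>x\<in>set (ys@[a]). 0 < x" using p ka assms by (auto simp: partsP_def)
  have dec: "\<forall>i. Suc i < Suc N \<longrightarrow> (ys@[a]) ! (Suc i) \<le> (ys@[a]) ! i \<and> (ys@[a]) ! i - (ys@[a]) ! (Suc i) \<ge> m"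
  proof (intro allI impI)
    fix i assume i: "Suc i < Suc N"
    show "(ys@[a]) ! (Suc i) \<le> (ys@[a]) ! i \<and> (ys@[a]) ! i - (ys@[a]) ! (Suc i) \<ge> m"
    proof (cases "Suc i < N")
      case True
      then show ?thesis using p len by (simp add: nth_append partsP_def)
    next
      case False
      then have "i = N - 1" "0 < N" using i by auto
      then show ?thesis using p len by (simp add: nth_append partsP_def) linarith
    qed
  qed
  show "ys @ [a] \<in> partsP (Suc N) k m"
    using pos dec len ka by (simp add: partsP_def nth_append)
qed

lemma omega_snoc:
  assumes "k \<le> a" "ys \<in> partsP N (a + m) m"
  shows "omega k m (ys @ [a]) = (a + 1 - k) * omega (a + m) m ys"
proof (cases "ys = []")
  case True
  then show ?thesis by (simp add: omega_def)
next
  case False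
  have len: "length ys = N" using assms by (simp add: partsP_def)
  then obtain N' where N': "N = Suc N'" using False by (cases N) auto
  have L: "last ys = ys ! N'" using False len N' by (simp add: last_conv_nth)
  have ge: "ys ! N' \<ge> a + m" using assms(2) N' by (simp add: partsP_def)
  have "(\<Prod>i<length (ys@[a]) - 1. (ys@[a]) ! i - (ys@[a]) ! (Suc i) + 1 - m)
     = (\<Prod>i<N'. (ys@[a]) ! i - (ys@[a]) ! (Suc i) + 1 - m) * ((ys@[a]) ! N' - (ys@[a]) ! (Suc N') + 1 - m)"
    using len N' by simp
  also have "(\<Prod>i<N'. (ys@[a]) ! i - (ys@[a]) ! (Suc i) + 1 - m) = (\<Prod>i<N'. ys ! i - ys ! (Suc i) + 1 - m)"
    using len N' by (intro prod.cong) (auto simp: nth_append)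
  also have "(ys@[a]) ! N' - (ys@[a]) ! (Suc N') + 1 - m = ys ! N' + 1 - (a + m)"
    using len N' ge by (simp add: nth_append)
  finally show ?thesis using False len N' L by (simp add: omega_def mult.commute mult.left_commute)
qed

definition gg :: "nat \<Rightarrow> nat \<Rightarrow> nat \<Rightarrow> nat \<Rightarrow> nat" where
  "gg M k m n = (\<Sum>xs\<in>SS M k m n. omega k m xs)"

definition hh :: "nat \<Rightarrow> nat \<Rightarrow> nat \<Rightarrow> nat \<Rightarrow> nat" where
  "hh M k m n = (\<Sum>xs\<in>SS M k m n. pr m xs)"

lemma omega_map_Suc: "omega (Suc k) m (map Suc ys) = omega k m ys"
proof (cases "ys = []")
  case True then show ?thesis by (simp add: omega_def)
next
  case False
  then show ?thesis by (simp add: omega_pr pr_map_Suc last_map)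
qed

lemma gg_shift: "k \<ge> 1 \<Longrightarrow> gg M (Suc k) m n = (if M \<le> n then gg M k m (n - M) else 0)"
  unfolding gg_def by (rule sum_shift) (simp_all add: omega_map_Suc)

lemma hh_shift: "k \<ge> 1 \<Longrightarrow> hh M (Suc k) m n = (if M \<le> n then hh M k m (n - M) else 0)"
  unfolding hh_def by (rule sum_shift) (simp_all add: pr_map_Suc)

lemma last_parts: "xs \<in> partsP (Suc N) k m \<Longrightarrow> xs \<noteq> [] \<and> last xs = xs ! N \<and> k \<le> last xs"
proof -
  assume h: "xs \<in> partsP (Suc N) k m"
  then have l: "length xs = Suc N" by (simp add: partsP_def)
  then have ne: "xs \<noteq> []" by auto
  then have "last xs = xs ! N" using l by (simp add: last_conv_nth)
  with ne h l show ?thesis by (simp add: partsP_def)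
qed

lemma parts_Suc_iff: "xs \<in> partsP (Suc N) (Suc k) m \<longleftrightarrow> xs \<in> partsP (Suc N) k m \<and> Suc k \<le> last xs"
  using last_parts[of xs N k m] last_parts[of xs N "Suc k" m]
  by (auto simp: partsP_def)

lemma gg_split:
  assumes "k \<ge> 1"
  shows "gg (Suc N) k m n = gg (Suc N) (Suc k) m n + hh (Suc N) k m n"
proof -
  have "gg (Suc N) k m n = (\<Sum>xs\<in>SS (Suc N) k m n. omega (Suc k) m xs + pr m xs)"
    unfolding gg_def
  proof (rule sum.cong)
    fix xs assume "xs \<in> SS (Suc N) k m n"
    then have l: "xs \<noteq> []" "k \<le> last xs" using last_parts by (auto simp: SS_def)
    then have "last xs + 1 - k = (last xs + 1 - Suc k) + 1" by simp
    then show "omega k m xs = omega (Suc k) m xs + pr m xs"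
      using l by (simp add: omega_pr distrib_right)
  qed simp
  also have "\<dots> = (\<Sum>xs\<in>SS (Suc N) k m n. omega (Suc k) m xs) + hh (Suc N) k m n"
    by (simp add: sum.distrib hh_def)
  also have "(\<Sum>xs\<in>SS (Suc N) k m n. omega (Suc k) m xs) = gg (Suc N) (Suc k) m n"
    unfolding gg_def
  proof (rule sum.mono_neutral_right)
    show "finite (SS (Suc N) k m n)" by (rule SS_finite)
    show "SS (Suc N) (Suc k) m n \<subseteq> SS (Suc N) k m n" by (auto simp: SS_def parts_Suc_iff)
    show "\<forall>i\<in>SS (Suc N) k m n - SS (Suc N) (Suc k) m n. omega (Suc k) m i = 0"
    proof
      fix xs assume "xs \<in> SS (Suc N) k m n - SS (Suc N) (Suc k) m n"
      then have "xs \<in> partsP (Suc N) k m" "\<not> Suc k \<le> last xs" by (auto simp: SS_def parts_Suc_iff)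
      then have "xs \<noteq> []" "last xs = k" using last_parts by fastforce+
      then show "omega (Suc k) m xs = 0" by (simp add: omega_pr)
    qed
  qed
  finally show ?thesis by simp
qed

lemma hh_split:
  assumes "k \<ge> 1"
  shows "hh (Suc N) k m n = hh (Suc N) (Suc k) m n + (if k \<le> n then gg N (k + m) m (n - k) else 0)"
proof -
  let ?A = "SS (Suc N) (Suc k) m n"
  let ?B = "{xs\<in>SS (Suc N) k m n. last xs = k}"
  have U: "SS (Suc N) k m n = ?A \<union> ?B"
  proof
    show "SS (Suc N) k m n \<subseteq> ?A \<union> ?B"
    proof
      fix xs assume xs: "xs \<in> SS (Suc N) k m n"
      then have p: "xs \<in> partsP (Suc N) k m" by (simp add: SS_def)
      then have "k \<le> last xs" using last_parts by blast
      then have "Suc k \<le> last xs \<or> last xs = k" by auto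
      then show "xs \<in> ?A \<union> ?B" using xs p by (auto simp: SS_def parts_Suc_iff)
    qed
    show "?A \<union> ?B \<subseteq> SS (Suc N) k m n" by (auto simp: SS_def parts_Suc_iff)
  qed
  have D: "?A \<inter> ?B = {}" by (auto simp: SS_def parts_Suc_iff)
  have fA: "finite ?A" by (rule SS_finite)
  have fB: "finite ?B" using SS_finite by simp
  have B: "?B = (\<lambda>ys. ys @ [k]) ` {ys\<in>partsP N (k + m) m. sum_list ys + k = n}"
  proof
    show "?B \<subseteq> (\<lambda>ys. ys @ [k]) ` {ys\<in>partsP N (k + m) m. sum_list ys + k = n}"
    proof
      fix xs assume xs: "xs \<in> ?B"
      then have ne: "xs \<noteq> []" using last_parts by (auto simp: SS_def)
      then have e: "xs = butlast xs @ [k]" using xs by (metis (mono_tags, lifting) append_butlast_last_id mem_Collect_eq)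
      have x1: "xs \<in> partsP (Suc N) k m" "sum_list xs = n" using xs by (auto simp: SS_def)
      have "butlast xs @ [k] \<in> partsP (Suc N) k m" using x1(1) e by metis
      then have "butlast xs \<in> partsP N (k + m) m" using snoc_iff[OF assms] by blast
      moreover have "sum_list (butlast xs @ [k]) = n" using x1(2) e by metis
      then have "sum_list (butlast xs) + k = n" by simp
      ultimately show "xs \<in> (\<lambda>ys. ys @ [k]) ` {ys\<in>partsP N (k + m) m. sum_list ys + k = n}"
        using e by blast
    qed
  next
    show "(\<lambda>ys. ys @ [k]) ` {ys\<in>partsP N (k + m) m. sum_list ys + k = n} \<subseteq> ?B"
    proof
      fix xs assume "xs \<in> (\<lambda>ys. ys @ [k]) ` {ys\<in>partsP N (k + m) m. sum_list ys + k = n}"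
      then obtain ys where ys: "xs = ys @ [k]" "ys \<in> partsP N (k + m) m" "sum_list ys + k = n" by blast
      then have "length ys = N" by (simp add: partsP_def)
      then have "xs \<in> partsP (Suc N) k m" using snoc_iff[OF assms] ys by simp
      then show "xs \<in> ?B" using ys by (simp add: SS_def)
    qed
  qed
  have "hh (Suc N) k m n = (\<Sum>xs\<in>?A. pr m xs) + (\<Sum>xs\<in>?B. pr m xs)"
    unfolding hh_def arg_cong[OF U, of "sum (pr m)"] by (rule sum.union_disjoint[OF fA fB D])
  also have "(\<Sum>xs\<in>?B. pr m xs) = (\<Sum>ys\<in>{ys\<in>partsP N (k + m) m. sum_list ys + k = n}. pr m (ys @ [k]))"
  proof -
    have inj: "inj_on (\<lambda>ys. ys @ [k]) {ys\<in>partsP N (k + m) m. sum_list ys + k = n}"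
      by (rule inj_onI) simp
    show ?thesis unfolding B by (simp add: sum.reindex[OF inj] o_def)
  qed
  also have "\<dots> = (\<Sum>ys\<in>{ys\<in>partsP N (k + m) m. sum_list ys + k = n}. omega (k + m) m ys)"
  proof (rule sum.cong)
    fix ys assume "ys \<in> {ys\<in>partsP N (k + m) m. sum_list ys + k = n}"
    then have "omega k m (ys @ [k]) = (k + 1 - k) * omega (k + m) m ys" by (intro omega_snoc) auto
    then show "pr m (ys @ [k]) = omega (k + m) m ys" by (simp add: omega_pr)
  qed simp
  also have "\<dots> = (if k \<le> n then gg N (k + m) m (n - k) else 0)"
  proof (cases "k \<le> n")
    case True
    then have "{ys\<in>partsP N (k + m) m. sum_list ys + k = n} = SS N (k + m) m (n - k)" by (auto simp: SS_def)
    then show ?thesis using True by (simp add: gg_def)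
  next
    case False
    then have "{ys\<in>partsP N (k + m) m. sum_list ys + k = n} = {}" by auto
    then show ?thesis using False by simp
  qed
  finally show ?thesis by (simp add: hh_def)
qed

definition HH :: "nat \<Rightarrow> nat \<Rightarrow> nat \<Rightarrow> rat fps" where
  "HH M k m = Abs_fps (\<lambda>n. of_nat (hh M k m n))"

lemma genfun_eq: "genfun M k m = Abs_fps (\<lambda>n. of_nat (gg M k m n))"
  by (simp add: genfun_def gg_def SS_def)

lemma G_shift: "k \<ge> 1 \<Longrightarrow> genfun M (Suc k) m = fps_X ^ M * genfun M k m"
  by (rule fps_ext) (simp add: genfun_eq fps_X_power_mult_nth gg_shift)

lemma H_shift: "k \<ge> 1 \<Longrightarrow> HH M (Suc k) m = fps_X ^ M * HH M k m"
  by (rule fps_ext) (simp add: HH_def fps_X_power_mult_nth hh_shift)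

lemma G_split:
  assumes k: "k \<ge> 1"
  shows "genfun (Suc N) k m = genfun (Suc N) (Suc k) m + HH (Suc N) k m"
proof (rule fps_ext)
  fix n
  show "genfun (Suc N) k m $ n = (genfun (Suc N) (Suc k) m + HH (Suc N) k m) $ n"
    unfolding fps_add_nth HH_def genfun_eq fps_nth_Abs_fps gg_split[OF k, of N m n] by simp
qed

lemma H_split:
  assumes k: "k \<ge> 1"
  shows "HH (Suc N) k m = HH (Suc N) (Suc k) m + fps_X ^ k * genfun N (k + m) m"
proof (rule fps_ext)
  fix n
  show "HH (Suc N) k m $ n = (HH (Suc N) (Suc k) m + fps_X ^ k * genfun N (k + m) m) $ n"
    unfolding fps_add_nth fps_X_power_mult_nth HH_def genfun_eq fps_nth_Abs_fps
      hh_split[OF k, of N m n] by simp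
qed

lemma recur:
  assumes "k \<ge> 1"
  shows "(1 - fps_X ^ Suc N) ^ 2 * genfun (Suc N) k m = fps_X ^ k * genfun N (k + m) m"
proof -
  let ?a = "fps_X ^ Suc N :: rat fps"
  let ?G = "genfun (Suc N) k m" and ?H = "HH (Suc N) k m"
  have e1: "?G = ?a * ?G + ?H" using G_split[OF assms] G_shift[OF assms] by simp
  have e2: "?H = ?a * ?H + fps_X ^ k * genfun N (k + m) m" using H_split[OF assms] H_shift[OF assms] by simp
  have h1: "(1 - ?a) * ?G = ?H"
  proof -
    have "(1 - ?a) * ?G = ?G - ?a * ?G" by (simp add: left_diff_distrib)
    also have "\<dots> = ?H" using e1 by (metis add_diff_cancel_left')
    finally show ?thesis .
  qed
  have h2: "(1 - ?a) * ?H = fps_X ^ k * genfun N (k + m) m"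
  proof -
    have "(1 - ?a) * ?H = ?H - ?a * ?H" by (simp add: left_diff_distrib)
    also have "\<dots> = fps_X ^ k * genfun N (k + m) m" using e2 by (metis add_diff_cancel_left')
    finally show ?thesis .
  qed
  have "(1 - ?a) ^ 2 * ?G = (1 - ?a) * ((1 - ?a) * ?G)" by (simp add: power2_eq_square mult.assoc)
  then show ?thesis by (simp only: power2_eq_square mult.assoc h1 h2)
qed

lemma partsP0: "partsP 0 k m = {[]}" by (auto simp: partsP_def)

lemma genfun0: "genfun 0 k m = 1"
proof (rule fps_ext)
  note P = partsP0[of k m]
  fix n
  show "genfun 0 k m $ n = (1::rat fps) $ n"
  proof (cases n)
    case 0
    have E: "{xs\<in>partsP 0 k m. sum_list xs = n} = {[]}" unfolding P 0 by (rule set_eqI) (simp, metis empty_iff list.set(1))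
    show ?thesis unfolding genfun_def fps_nth_Abs_fps E using 0 by (simp add: omega_def)
  next
    case (Suc j)
    have E: "{xs\<in>partsP 0 k m. sum_list xs = n} = {}" using Suc by (simp add: P)
    show ?thesis unfolding genfun_def fps_nth_Abs_fps E using Suc by simp
  qed
qed

lemma qpoch_Suc: "qpoch (fps_X :: rat fps) fps_X (Suc N) = qpoch fps_X fps_X N * (1 - fps_X ^ Suc N)"
  by (simp add: qpoch_def)

lemma choose2: "Suc N choose 2 = (N choose 2) + N"
  by (simp add: numeral_2_eq_2)

lemma main:
  "k \<ge> 1 \<Longrightarrow> genfun M k m * (qpoch (fps_X :: rat fps) fps_X M) ^ 2 = fps_X ^ (m * (M choose 2) + k * M)"
proof (induction M arbitrary: k)
  case 0
  then show ?case by (simp add: genfun0 qpoch_def numeral_2_eq_2)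
next
  case (Suc N)
  have "genfun (Suc N) k m * (qpoch (fps_X :: rat fps) fps_X (Suc N)) ^ 2
      = ((1 - fps_X ^ Suc N) ^ 2 * genfun (Suc N) k m) * (qpoch fps_X fps_X N) ^ 2"
    by (simp add: qpoch_Suc power_mult_distrib)
  also have "\<dots> = fps_X ^ k * (genfun N (k + m) m * (qpoch fps_X fps_X N) ^ 2)"
    by (metis recur[OF Suc.prems] mult.assoc)
  also have "\<dots> = fps_X ^ k * fps_X ^ (m * (N choose 2) + (k + m) * N)"
    using Suc.IH[of "k + m"] Suc.prems by simp
  also have "\<dots> = fps_X ^ (m * (Suc N choose 2) + k * Suc N)"
    by (simp add: choose2 power_add[symmetric] algebra_simps)
  finally show ?case .
qed

lemma qpoch_nz: "qpoch (fps_X :: rat fps) fps_X M \<noteq> 0"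
proof -
  have "\<And>n. (1 - fps_X * fps_X ^ n :: rat fps) \<noteq> 0"
  proof
    fix n assume "(1 - fps_X * fps_X ^ n :: rat fps) = 0"
    then have "(1 - fps_X * fps_X ^ n :: rat fps) $ 0 = 0" by simp
    then show False by simp
  qed
  then show ?thesis by (simp add: qpoch_def)
qed

theorem theorem5:
  fixes M k m :: nat
  assumes "k \<ge> 1"
  shows "genfun M k m =
    fps_X ^ (m * (M choose 2) + k * M) / (qpoch (fps_X :: rat fps) fps_X M) ^ 2"
proof -
  have nz: "(qpoch (fps_X :: rat fps) fps_X M) ^ 2 \<noteq> 0" using qpoch_nz by simp
  show ?thesis unfolding main[OF assms, symmetric] using nz by simp
qed

end
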